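(* Let $(X,\sigma)$ be a one-sided subshift. If there is $z\in X$ such that the set $\{y\in X:(y,z)\in\mathrm{SProx}(\sigma)\}$ is uncountable, then $(X,\sigma)$ has a Cantor syndetically scrambled set.
   Context: A one-sided subshift is a nonempty closed $\sigma$-invariant subset of $\mathcal A^{\mathbb N_0}$ ($\mathcal A$ finite) with the left shift $\sigma$. $\mathrm{Asy}(\sigma)=\{(x,y):d(\sigma^nx,\sigma^ny)\to0\}$; $\mathrm{SProx}(\sigma)=\{(x,y):\{n:d(\sigma^nx,\sigma^ny)<\varepsilon\}$ syndetic for all $\varepsilon>0\}$, syndetic meaning meeting every subset of $\mathbb N$ with arbitrarily long runs of consecutive integers. A syndetically scrambled set is a set with at least two points all of whose distinct pairs lie in $\mathrm{SProx}(\sigma)\setminus\mathrm{Asy}(\sigma)$. A Cantor set is a nonempty compact perfect totally disconnected set. *)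

theory Defs
  imports "HOL-Analysis.Analysis"
begin

definition shift_top :: "'a set \<Rightarrow> (nat \<Rightarrow> 'a) topology" where
  "shift_top A = product_topology (\<lambda>_. discrete_topology A) UNIV"

definition sigma :: "(nat \<Rightarrow> 'a) \<Rightarrow> (nat \<Rightarrow> 'a)" where
  "sigma x = (\<lambda>n. x (Suc n))"

definition sdist :: "(nat \<Rightarrow> 'a) \<Rightarrow> (nat \<Rightarrow> 'a) \<Rightarrow> real" where
  "sdist x y = (if x = y then 0 else (1/2) ^ (LEAST n. x n \<noteq> y n))"

definition one_sided_subshift :: "'a set \<Rightarrow> (nat \<Rightarrow> 'a) set \<Rightarrow> bool" where
  "one_sided_subshift A X \<longleftrightarrow> finite A \<and> X \<noteq> {} \<and> X \<subseteq> topspace (shift_top A)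
     \<and> closedin (shift_top A) X \<and> sigma ` X \<subseteq> X"

definition thick :: "nat set \<Rightarrow> bool" where
  "thick S \<longleftrightarrow> (\<forall>L. \<exists>m. {m..<m+L} \<subseteq> S)"

definition syndetic :: "nat set \<Rightarrow> bool" where
  "syndetic S \<longleftrightarrow> (\<forall>T. thick T \<longrightarrow> S \<inter> T \<noteq> {})"

definition Asy :: "(nat \<Rightarrow> 'a) set \<Rightarrow> ((nat \<Rightarrow> 'a) \<times> (nat \<Rightarrow> 'a)) set" where
  "Asy X = {(x,y). x \<in> X \<and> y \<in> X \<and>
      (\<lambda>n. sdist ((sigma ^^ n) x) ((sigma ^^ n) y)) \<longlonglongrightarrow> 0}"

definition SProx :: "(nat \<Rightarrow> 'a) set \<Rightarrow> ((nat \<Rightarrow> 'a) \<times> (nat \<Rightarrow> 'a)) set" where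
  "SProx X = {(x,y). x \<in> X \<and> y \<in> X \<and>
      (\<forall>\<epsilon>>0. syndetic {n. sdist ((sigma ^^ n) x) ((sigma ^^ n) y) < \<epsilon>})}"

definition synd_scrambled :: "(nat \<Rightarrow> 'a) set \<Rightarrow> (nat \<Rightarrow> 'a) set \<Rightarrow> bool" where
  "synd_scrambled X S \<longleftrightarrow> S \<subseteq> X \<and> (\<exists>x\<in>S. \<exists>y\<in>S. x \<noteq> y) \<and>
     (\<forall>x\<in>S. \<forall>y\<in>S. x \<noteq> y \<longrightarrow> (x,y) \<in> SProx X - Asy X)"

definition cantor_set_in :: "'b topology \<Rightarrow> 'b set \<Rightarrow> bool" where
  "cantor_set_in T C \<longleftrightarrow> C \<noteq> {} \<and> compactin T C \<and> C \<subseteq> T derived_set_of C \<and>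
     (\<forall>S. S \<subseteq> C \<and> connectedin T S \<longrightarrow> (\<exists>a. S \<subseteq> {a}))"

end

theory Submission
  imports Defs
begin


lemma sigma_pow: "(sigma ^^ n) x i = x (n + i)"
  by (induction n arbitrary: x i) (auto simp: sigma_def funpow_Suc_right)

lemma sdist_lt_pow: "sdist u v < (1/2::real) ^ k \<longleftrightarrow> (\<forall>i\<le>k. u i = v i)"
proof (cases "u = v")
  case True then show ?thesis by (simp add: sdist_def)
next
  case False
  then obtain j where j: "u j \<noteq> v j" by auto
  define l where "l = (LEAST n. u n \<noteq> v n)"
  have l1: "u l \<noteq> v l" unfolding l_def by (rule LeastI[of _ j]) (rule j)
  have l2: "\<And>i. i < l \<Longrightarrow> u i = v i" unfolding l_def using not_less_Least by blast
  have "sdist u v = (1/2) ^ l" using False by (simp add: sdist_def l_def)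
  moreover have "((1/2::real) ^ l < (1/2) ^ k) \<longleftrightarrow> k < l"
    by (simp add: power_strict_decreasing_iff)
  moreover have "k < l \<longleftrightarrow> (\<forall>i\<le>k. u i = v i)"
  proof
    assume "k < l" then show "\<forall>i\<le>k. u i = v i" using l2 by simp
  next
    assume "\<forall>i\<le>k. u i = v i"
    then show "k < l" using l1 by (cases "k < l") auto
  qed
  ultimately show ?thesis by simp
qed

definition bgap :: "nat set \<Rightarrow> nat \<Rightarrow> bool" where
  "bgap S G \<longleftrightarrow> (\<forall>j. \<exists>n\<in>S. j \<le> n \<and> n < j + G)"

lemma syndetic_iff: "syndetic S \<longleftrightarrow> (\<exists>G. bgap S G)"
proof
  assume s: "syndetic S"
  show "\<exists>G. bgap S G"
  proof (rule ccontr)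
    assume "\<not> ?thesis"
    then have "\<forall>G. \<exists>j. \<forall>n\<in>S. \<not> (j \<le> n \<and> n < j + G)" unfolding bgap_def by blast
    then have "thick (- S)" unfolding thick_def by fastforce
    with s show False unfolding syndetic_def by blast
  qed
next
  assume "\<exists>G. bgap S G"
  then obtain G where G: "bgap S G" by blast
  show "syndetic S" unfolding syndetic_def
  proof (intro allI impI)
    fix T assume "thick T"
    then obtain m where m: "{m..<m+G} \<subseteq> T" unfolding thick_def by blast
    from G obtain n where "n \<in> S" "m \<le> n" "n < m + G" unfolding bgap_def by blast
    with m show "S \<inter> T \<noteq> {}" by auto
  qed
qed

definition agr :: "(nat \<Rightarrow> 'a) \<Rightarrow> (nat \<Rightarrow> 'a) \<Rightarrow> nat \<Rightarrow> nat set" where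
  "agr x y k = {n. \<forall>i\<le>k. x (n + i) = y (n + i)}"

lemma SProx_iff: "(x, y) \<in> SProx X \<longleftrightarrow> x \<in> X \<and> y \<in> X \<and> (\<forall>k. \<exists>G. bgap (agr x y k) G)"
proof -
  have eq': "sdist ((sigma ^^ n) x) ((sigma ^^ n) y) < (1/2) ^ k \<longleftrightarrow> n \<in> agr x y k" for n k
    by (simp add: sdist_lt_pow sigma_pow agr_def)
  have eq: "{n. sdist ((sigma ^^ n) x) ((sigma ^^ n) y) < (1/2) ^ k} = agr x y k" for k
    using eq' by blast
  have "(\<forall>\<epsilon>>0. syndetic {n. sdist ((sigma ^^ n) x) ((sigma ^^ n) y) < \<epsilon>})
        \<longleftrightarrow> (\<forall>k. \<exists>G. bgap (agr x y k) G)"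
  proof
    assume H: "\<forall>\<epsilon>>0. syndetic {n. sdist ((sigma ^^ n) x) ((sigma ^^ n) y) < \<epsilon>}"
    show "\<forall>k. \<exists>G. bgap (agr x y k) G"
    proof
      fix k
      have "syndetic (agr x y k)" using H[rule_format, of "(1/2)^k"] eq[of k] by simp
      then show "\<exists>G. bgap (agr x y k) G" by (simp add: syndetic_iff)
    qed
  next
    assume H: "\<forall>k. \<exists>G. bgap (agr x y k) G"
    show "\<forall>\<epsilon>>0. syndetic {n. sdist ((sigma ^^ n) x) ((sigma ^^ n) y) < \<epsilon>}"
    proof (intro allI impI)
      fix \<epsilon> :: real assume "\<epsilon> > 0"
      then obtain k where k: "(1/2::real)^k < \<epsilon>" using real_arch_pow_inv[of \<epsilon> "1/2"] by auto
      from H obtain G where G: "bgap (agr x y k) G" by blast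
      have "agr x y k \<subseteq> {n. sdist ((sigma ^^ n) x) ((sigma ^^ n) y) < \<epsilon>}"
      proof
        fix n assume "n \<in> agr x y k"
        then have "sdist ((sigma ^^ n) x) ((sigma ^^ n) y) < (1/2)^k" using eq'[of n k] by (rule iffD2[rotated])
        then show "n \<in> {n. sdist ((sigma ^^ n) x) ((sigma ^^ n) y) < \<epsilon>}" using k by simp
      qed
      with G have "bgap {n. sdist ((sigma ^^ n) x) ((sigma ^^ n) y) < \<epsilon>} G"
        unfolding bgap_def by blast
      then show "syndetic {n. sdist ((sigma ^^ n) x) ((sigma ^^ n) y) < \<epsilon>}"
        by (auto simp: syndetic_iff)
    qed
  qed
  then show ?thesis unfolding SProx_def by auto
qed

lemma agr_trans:
  assumes "\<forall>k. \<exists>G. bgap (agr x z k) G" and "\<forall>k. \<exists>G. bgap (agr y z k) G"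
  shows "\<forall>k. \<exists>G. bgap (agr x y k) G"
proof
  fix k
  obtain G1 where G1: "bgap (agr x z k) G1" using assms(1) by blast
  obtain H where H: "bgap (agr y z (G1 + k)) H" using assms(2) by blast
  have "bgap (agr x y k) (H + G1)" unfolding bgap_def
  proof
    fix j
    obtain a where a: "a \<in> agr y z (G1 + k)" "j \<le> a" "a < j + H" using H unfolding bgap_def by blast
    obtain b where b: "b \<in> agr x z k" "a \<le> b" "b < a + G1" using G1 unfolding bgap_def by blast
    have "b \<in> agr x y k" unfolding agr_def
    proof (intro CollectI allI impI)
      fix i assume i: "i \<le> k"
      have "b - a + i \<le> G1 + k" using b(3) i by arith
      moreover have "\<forall>i'\<le>G1 + k. y (a + i') = z (a + i')" using a(1) by (simp add: agr_def)
      ultimately have "y (a + (b - a + i)) = z (a + (b - a + i))" by simp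
      then have "y (b + i) = z (b + i)" using b(2) by (simp add: add.assoc)
      moreover have "x (b + i) = z (b + i)" using b(1) i unfolding agr_def by auto
      ultimately show "x (b + i) = y (b + i)" by simp
    qed
    then show "\<exists>n\<in>agr x y k. j \<le> n \<and> n < j + (H + G1)" using a b by (intro bexI[of _ b]) auto
  qed
  then show "\<exists>G. bgap (agr x y k) G" by blast
qed

lemma Asy_ev: assumes "(x, y) \<in> Asy X" shows "\<exists>N. \<forall>n\<ge>N. x n = y n"
proof -
  have "(\<lambda>n. sdist ((sigma ^^ n) x) ((sigma ^^ n) y)) \<longlonglongrightarrow> 0"
    using assms unfolding Asy_def by auto
  then have "eventually (\<lambda>n. sdist ((sigma ^^ n) x) ((sigma ^^ n) y) < 1) sequentially"
    by (rule order_tendstoD) simp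
  then obtain N where N: "\<And>n. n \<ge> N \<Longrightarrow> sdist ((sigma ^^ n) x) ((sigma ^^ n) y) < 1"
    unfolding eventually_sequentially by blast
  have "x n = y n" if "n \<ge> N" for n
    using N[OF that] sdist_lt_pow[of "(sigma^^n) x" "(sigma^^n) y" 0] by (simp add: sigma_pow)
  then show ?thesis by blast
qed



lemma top_DT: "topspace (product_topology (\<lambda>_. discrete_topology A) (UNIV::nat set)) = {x. \<forall>i. x i \<in> A}"
  by (auto simp: PiE_def extensional_def)

lemma PiE_UNIV_iff [simp]: "(x \<in> Pi\<^sub>E UNIV (\<lambda>_. A)) = (\<forall>i. x i \<in> A)"
  by (auto simp: PiE_def extensional_def)

lemma open_DT:
  "openin (product_topology (\<lambda>_. discrete_topology A) (UNIV::nat set)) S \<longleftrightarrow>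
     S \<subseteq> {x. \<forall>i. x i \<in> A} \<and> (\<forall>x\<in>S. \<exists>N. {y. (\<forall>i. y i \<in> A) \<and> (\<forall>i<N. y i = x i)} \<subseteq> S)"
proof
  assume op: "openin (product_topology (\<lambda>_. discrete_topology A) (UNIV::nat set)) S"
  have sub: "S \<subseteq> {x. \<forall>i. x i \<in> A}" using openin_subset[OF op] by auto
  have "\<exists>N. {y. (\<forall>i. y i \<in> A) \<and> (\<forall>i<N. y i = x i)} \<subseteq> S" if x: "x \<in> S" for x
  proof -
    have "\<exists>U. finite {i \<in> UNIV. U i \<noteq> topspace (discrete_topology A)} \<and>
             (\<forall>i\<in>UNIV. openin (discrete_topology A) (U i)) \<and> x \<in> Pi\<^sub>E UNIV U \<and> Pi\<^sub>E UNIV U \<subseteq> S"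
      using op x unfolding openin_product_topology_alt by blast
    then obtain U where U0: "finite {i \<in> UNIV. U i \<noteq> topspace (discrete_topology A)}" and
       U: "x \<in> Pi\<^sub>E UNIV U" "Pi\<^sub>E UNIV U \<subseteq> S"
      by blast
    have Ufin: "finite {i. U i \<noteq> A}" using U0 by simp
    obtain N where N: "\<forall>i\<in>{i. U i \<noteq> A}. i < N" using finite_nat_set_iff_bounded[THEN iffD1, OF Ufin] by blast
    have "{y. (\<forall>i. y i \<in> A) \<and> (\<forall>i<N. y i = x i)} \<subseteq> Pi\<^sub>E UNIV U"
    proof
      fix y assume y: "y \<in> {y. (\<forall>i. y i \<in> A) \<and> (\<forall>i<N. y i = x i)}"
      have "y i \<in> U i" for i
      proof (cases "i < N")
        case True then show ?thesis using y U(1) by (auto simp: PiE_def Pi_def)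
      next
        case False then have "U i = A" using N by auto
        then show ?thesis using y by auto
      qed
      then show "y \<in> Pi\<^sub>E UNIV U" by (simp add: PiE_iff)
    qed
    then show ?thesis using subset_trans[OF _ U(2)] by blast
  qed
  then show "S \<subseteq> {x. \<forall>i. x i \<in> A} \<and> (\<forall>x\<in>S. \<exists>N. {y. (\<forall>i. y i \<in> A) \<and> (\<forall>i<N. y i = x i)} \<subseteq> S)"
    using sub by blast
next
  assume H: "S \<subseteq> {x. \<forall>i. x i \<in> A} \<and> (\<forall>x\<in>S. \<exists>N. {y. (\<forall>i. y i \<in> A) \<and> (\<forall>i<N. y i = x i)} \<subseteq> S)"
  show "openin (product_topology (\<lambda>_. discrete_topology A) (UNIV::nat set)) S"
    unfolding openin_product_topology_alt
  proof
    fix x assume x: "x \<in> S"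
    then obtain N where N: "{y. (\<forall>i. y i \<in> A) \<and> (\<forall>i<N. y i = x i)} \<subseteq> S" using H by blast
    have xA: "\<forall>i. x i \<in> A" using H x by blast
    define U where "U = (\<lambda>i. if i < N then {x i} else A)"
    have "{i \<in> UNIV. U i \<noteq> topspace (discrete_topology A)} \<subseteq> {..<N}" by (auto simp: U_def)
    then have "finite {i \<in> UNIV. U i \<noteq> topspace (discrete_topology A)}"
      by (rule finite_subset) simp
    moreover have "\<forall>i\<in>UNIV. openin (discrete_topology A) (U i)" using xA by (auto simp: U_def)
    moreover have "x \<in> Pi\<^sub>E UNIV U" using xA by (auto simp: U_def)
    moreover have "Pi\<^sub>E UNIV U \<subseteq> S"
    proof
      fix y assume "y \<in> Pi\<^sub>E UNIV U"
      then have yU: "\<And>i. y i \<in> U i" by (auto simp: PiE_def)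
      have "(\<forall>i. y i \<in> A) \<and> (\<forall>i<N. y i = x i)"
      proof (intro conjI allI impI)
        fix i show "y i \<in> A" using yU[of i] xA by (cases "i<N") (auto simp: U_def)
      next
        fix i assume "i<N" then show "y i = x i" using yU[of i] by (simp add: U_def)
      qed
      then show "y \<in> S" using N by blast
    qed
    ultimately show "\<exists>U. finite {i \<in> UNIV. U i \<noteq> topspace (discrete_topology A)} \<and>
               (\<forall>i\<in>UNIV. openin (discrete_topology A) (U i)) \<and> x \<in> Pi\<^sub>E UNIV U \<and> Pi\<^sub>E UNIV U \<subseteq> S"
      by blast
  qed
qed

lemma closed_DT_mem:
  assumes "closedin (product_topology (\<lambda>_. discrete_topology A) (UNIV::nat set)) S"
    and "\<forall>i. x i \<in> A" and "\<forall>N. \<exists>y\<in>S. \<forall>i<N. y i = x i"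
  shows "x \<in> S"
proof (rule ccontr)
  assume nx: "x \<notin> S"
  have "openin (product_topology (\<lambda>_. discrete_topology A) (UNIV::nat set))
          (topspace (product_topology (\<lambda>_. discrete_topology A) (UNIV::nat set)) - S)"
    using assms(1) by (simp add: closedin_def)
  moreover have "x \<in> topspace (product_topology (\<lambda>_. discrete_topology A) (UNIV::nat set)) - S"
    using nx assms(2) by (simp add: top_DT)
  ultimately obtain N where N: "{y. (\<forall>i. y i \<in> A) \<and> (\<forall>i<N. y i = x i)}
      \<subseteq> topspace (product_topology (\<lambda>_. discrete_topology A) (UNIV::nat set)) - S"
    unfolding open_DT by blast
  obtain y where y: "y \<in> S" "\<forall>i<N. y i = x i" using assms(3) by blast
  have "y \<in> topspace (product_topology (\<lambda>_. discrete_topology A) (UNIV::nat set))"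
    using assms(1) y(1) closedin_subset by blast
  then have "\<forall>i. y i \<in> A" by (simp add: top_DT)
  then show False using N y by blast
qed

lemma totdisc_DT:
  assumes "connectedin (product_topology (\<lambda>_. discrete_topology A) (UNIV::nat set)) S"
  shows "\<exists>a. S \<subseteq> {a}"
proof (rule ccontr)
  assume "\<not> ?thesis"
  then obtain x y where xy: "x \<in> S" "y \<in> S" "x \<noteq> y" by blast
  then obtain i where i: "x i \<noteq> y i" by auto
  have "connectedin (discrete_topology A) ((\<lambda>u. u i) ` S)"
    by (rule connectedin_continuous_map_image[OF continuous_map_product_projection assms]) simp
  then obtain a where "(\<lambda>u. u i) ` S \<subseteq> {a}" by (auto simp: connectedin_discrete_topology)
  then show False using xy i by auto
qed



definition cyl :: "nat \<Rightarrow> (nat \<Rightarrow> 'a) \<Rightarrow> (nat \<Rightarrow> 'a) set" where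
  "cyl N p = {r. \<forall>i<N. r i = p i}"

definition cond :: "(nat \<Rightarrow> 'a) set \<Rightarrow> (nat \<Rightarrow> 'a) set" where
  "cond B = {p. \<forall>N. uncountable (B \<inter> cyl N p)}"

lemma noncond_countable:
  assumes A: "finite A" and B: "B \<subseteq> {r. \<forall>i. r i \<in> A}"
  shows "countable (B - cond B)"
proof -
  define W where "W N = {w. set w \<subseteq> A \<and> length w = N}" for N
  define P where "P N w = B \<inter> {r. \<forall>i<N. r i = w ! i}" for N and w :: "'a list"
  have sub: "B - cond B \<subseteq> (\<Union>N. \<Union>w\<in>{w\<in>W N. countable (P N w)}. P N w)"
  proof
    fix p assume p: "p \<in> B - cond B"
    then obtain N where N: "countable (B \<inter> cyl N p)" unfolding cond_def by auto
    define w where "w = map p [0..<N]"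
    have pA: "\<forall>i. p i \<in> A" using p B by auto
    have wW: "w \<in> W N" using pA by (auto simp: W_def w_def)
    have eq: "P N w = B \<inter> cyl N p" by (simp add: P_def cyl_def w_def)
    have pP: "p \<in> P N w" using p by (simp add: P_def w_def)
    have wc: "w \<in> {w\<in>W N. countable (P N w)}" using wW N eq by simp
    show "p \<in> (\<Union>N. \<Union>w\<in>{w\<in>W N. countable (P N w)}. P N w)"
      by (rule UN_I[OF UNIV_I], rule UN_I[OF wc], rule pP)
  qed
  have "countable (\<Union>N. \<Union>w\<in>{w\<in>W N. countable (P N w)}. P N w)"
  proof (rule countable_UN[of UNIV], simp)
    fix N
    have "finite (W N)" unfolding W_def by (rule finite_lists_length_eq[OF A])
    then have "countable {w\<in>W N. countable (P N w)}" by (auto intro: countable_finite)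
    then show "countable (\<Union>w\<in>{w\<in>W N. countable (P N w)}. P N w)"
      by (rule countable_UN) simp
  qed
  then show ?thesis using sub countable_subset by blast
qed

lemma cond_big:
  assumes "finite A" "B \<subseteq> {r. \<forall>i. r i \<in> A}" "uncountable B"
  shows "uncountable (B \<inter> cond B)"
proof -
  have "uncountable (B - (B - cond B))"
    using uncountable_minus_countable[OF assms(3) noncond_countable[OF assms(1,2)]] .
  moreover have "B - (B - cond B) = B \<inter> cond B" by blast
  ultimately show ?thesis by simp
qed

lemma tail_finite:
  fixes L :: nat
  assumes A: "finite A"
  shows "finite {r. (\<forall>i. r i \<in> A) \<and> (\<forall>n\<ge>L. r n = c n)}"
proof -
  let ?S = "{r. (\<forall>i. r i \<in> A) \<and> (\<forall>n\<ge>L. r n = c n)}"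
  have inj: "inj_on (\<lambda>r. map r [0..<L]) ?S"
  proof (rule inj_onI)
    fix r s assume r: "r \<in> ?S" and s: "s \<in> ?S" and e: "map r [0..<L] = map s [0..<L]"
    show "r = s"
    proof
      fix i show "r i = s i"
      proof (cases "i < L")
        case True
        have "map r [0..<L] ! i = map s [0..<L] ! i" using e by (simp only:)
        then show ?thesis using True by simp
      next
        case False then show ?thesis using r s by simp
      qed
    qed
  qed
  have "(\<lambda>r. map r [0..<L]) ` ?S \<subseteq> {w. set w \<subseteq> A \<and> length w = L}" by auto
  then have "finite ((\<lambda>r. map r [0..<L]) ` ?S)"
    by (rule finite_subset) (rule finite_lists_length_eq[OF A])
  then show ?thesis using finite_imageD[OF _ inj] by blast
qed

lemma pick:
  assumes A: "finite A" and I: "finite I"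
    and D: "\<forall>i\<in>I. D i \<subseteq> {r. \<forall>n. r n \<in> A} \<and> uncountable (D i)"
  shows "\<exists>q. \<forall>i\<in>I. q i \<in> D i \<and> q i \<in> cond (D i) \<and> (\<forall>j\<in>I. j \<noteq> i \<longrightarrow> (\<exists>n\<ge>L. q i n \<noteq> q j n))"
  using I D
proof (induction I rule: finite_induct)
  case empty then show ?case by simp
next
  case (insert a F)
  have "\<forall>i\<in>F. D i \<subseteq> {r. \<forall>n. r n \<in> A} \<and> uncountable (D i)" using insert.prems by simp
  then obtain q where q: "\<forall>i\<in>F. q i \<in> D i \<and> q i \<in> cond (D i) \<and> (\<forall>j\<in>F. j \<noteq> i \<longrightarrow> (\<exists>n\<ge>L. q i n \<noteq> q j n))"
    using insert.IH by blast
  have qD: "q i \<in> D i" "q i \<in> cond (D i)" if "i \<in> F" for i using q that by simp_all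
  have qdiff: "\<exists>n\<ge>L. q i n \<noteq> q j n" if "i \<in> F" "j \<in> F" "j \<noteq> i" for i j
    using q that by simp
  have Da: "D a \<subseteq> {r. \<forall>n. r n \<in> A}" "uncountable (D a)" using insert.prems by auto
  define Bad where "Bad = (\<Union>j\<in>F. {r. (\<forall>i. r i \<in> A) \<and> (\<forall>n\<ge>L. r n = q j n)})"
  have "finite Bad" unfolding Bad_def by (intro finite_UN_I insert.hyps(1) tail_finite[OF A])
  then have unc: "uncountable ((D a \<inter> cond (D a)) - Bad)"
    by (intro uncountable_minus_countable[OF cond_big[OF A Da]] countable_finite)
  have "(D a \<inter> cond (D a)) - Bad \<noteq> {}"
  proof
    assume "(D a \<inter> cond (D a)) - Bad = {}"
    then have "(D a \<inter> cond (D a)) - Bad = {}" .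
    then show False using unc by (metis countable_empty)
  qed
  then obtain r where r: "r \<in> D a" "r \<in> cond (D a)" "r \<notin> Bad"
    by blast
  have rA: "\<forall>i. r i \<in> A" using r(1) Da(1) by auto
  have rdiff: "\<exists>n\<ge>L. r n \<noteq> q j n" if "j \<in> F" for j
  proof -
    have "r \<notin> {r. (\<forall>i. r i \<in> A) \<and> (\<forall>n\<ge>L. r n = q j n)}"
      using r(3) that unfolding Bad_def by blast
    then have "\<not> (\<forall>n\<ge>L. r n = q j n)" using rA by simp
    then show ?thesis by simp
  qed
  have aF: "a \<notin> F" by (rule insert.hyps(2))
  define q' where "q' = q(a := r)"
  have q'a: "q' a = r" by (simp add: q'_def)
  have q'F: "q' i = q i" if "i \<in> F" for i using that aF by (auto simp: q'_def)
  show ?case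
  proof (rule exI[of _ q'], intro ballI conjI allI impI)
    fix i assume i: "i \<in> insert a F"
    show "q' i \<in> D i"
    proof (cases "i = a")
      case True then show ?thesis using q'a r(1) by simp
    next
      case False then have "i \<in> F" using i by simp
      then show ?thesis using q'F qD by simp
    qed
    show "q' i \<in> cond (D i)"
    proof (cases "i = a")
      case True then show ?thesis using q'a r(2) by simp
    next
      case False then have "i \<in> F" using i by simp
      then show ?thesis using q'F qD by simp
    qed
    fix j assume j: "j \<in> insert a F" "j \<noteq> i"
    show "\<exists>n\<ge>L. q' i n \<noteq> q' j n"
    proof (cases "i = a")
      case True
      then have jF: "j \<in> F" using j by auto
      then show ?thesis using rdiff[OF jF] True q'a q'F[OF jF] by simp
    next
      case False
      then have iF: "i \<in> F" using i by auto
      show ?thesis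
      proof (cases "j = a")
        case True
        obtain n where "n \<ge> L" "r n \<noteq> q i n" using rdiff[OF iF] by blast
        then show ?thesis using True q'a q'F[OF iF] by (intro exI[of _ n]) simp
      next
        case jF: False
        then have jF': "j \<in> F" using j by auto
        then show ?thesis using qdiff[OF iF jF' j(2)] q'F[OF iF] q'F[OF jF'] by simp
      qed
    qed
  qed
qed



definition Pst :: "(nat \<Rightarrow> 'a) set \<Rightarrow> (nat \<Rightarrow> 'a) \<Rightarrow> nat \<Rightarrow>
    nat \<times> (bool list \<Rightarrow> nat \<Rightarrow> 'a) \<times> (bool list \<Rightarrow> (nat \<Rightarrow> 'a) set) \<Rightarrow> bool" where
  "Pst Y z m st = (case st of (L, p, B) \<Rightarrow> m \<le> L \<and>
     (\<forall>s. length s = m \<longrightarrow> p s \<in> B s \<and> B s \<subseteq> Y \<and> uncountable (B s) \<and> B s \<subseteq> cyl L (p s) \<and>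
        (\<forall>k<m. \<exists>G. \<forall>q\<in>B s. bgap (agr q z k) G)))"

definition Qst :: "nat \<Rightarrow> nat \<times> (bool list \<Rightarrow> nat \<Rightarrow> 'a) \<times> (bool list \<Rightarrow> (nat \<Rightarrow> 'a) set) \<Rightarrow>
    nat \<times> (bool list \<Rightarrow> nat \<Rightarrow> 'a) \<times> (bool list \<Rightarrow> (nat \<Rightarrow> 'a) set) \<Rightarrow> bool" where
  "Qst m st st' = (case st of (L, p, B) \<Rightarrow> case st' of (L', p', B') \<Rightarrow> L < L' \<and>
     (\<forall>s b. length s = m \<longrightarrow> B' (s @ [b]) \<subseteq> B s) \<and>
     (\<forall>s t. length s = Suc m \<longrightarrow> length t = Suc m \<longrightarrow> s \<noteq> t \<longrightarrow>
        (\<exists>i. L \<le> i \<and> i < L' \<and> p' s i \<noteq> p' t i)))"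

lemma step:
  assumes A: "finite A" and YA: "Y \<subseteq> {r. \<forall>i. r i \<in> A}"
    and Yg: "\<And>y k. y \<in> Y \<Longrightarrow> \<exists>G. bgap (agr y z k) G"
    and P: "Pst Y z m (L, p, B)"
  shows "\<exists>L' p' B'. Pst Y z (Suc m) (L', p', B') \<and> Qst m (L, p, B) (L', p', B')"
proof -
  have mL: "m \<le> L" using P by (simp add: Pst_def)
  have Ps: "p s \<in> B s \<and> B s \<subseteq> Y \<and> uncountable (B s) \<and> B s \<subseteq> cyl L (p s) \<and>
        (\<forall>k<m. \<exists>G. \<forall>q\<in>B s. bgap (agr q z k) G)" if "length s = m" for s
    using P that by (simp add: Pst_def)
  have exG: "\<exists>G. uncountable (B s \<inter> {q. bgap (agr q z m) G})" if s: "length s = m" for s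
  proof (rule ccontr)
    assume "\<not> ?thesis"
    then have c: "\<And>G. countable (B s \<inter> {q. bgap (agr q z m) G})" by blast
    have "B s \<subseteq> (\<Union>G. B s \<inter> {q. bgap (agr q z m) G})"
    proof
      fix q assume q: "q \<in> B s"
      then have "q \<in> Y" using Ps[OF s] by blast
      then obtain G where "bgap (agr q z m) G" using Yg by blast
      then show "q \<in> (\<Union>G. B s \<inter> {q. bgap (agr q z m) G})" using q by blast
    qed
    moreover have "countable (\<Union>G. B s \<inter> {q. bgap (agr q z m) G})"
      by (rule countable_UN[OF _ c]) simp
    ultimately have "countable (B s)" by (rule countable_subset)
    then show False using Ps[OF s] by simp
  qed
  define Gs where "Gs s = (SOME G. uncountable (B s \<inter> {q. bgap (agr q z m) G}))" for s
  have Gs: "uncountable (B s \<inter> {q. bgap (agr q z m) (Gs s)})" if "length s = m" for s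
    unfolding Gs_def by (rule someI_ex[OF exG[OF that]])
  define B1 where "B1 s = B s \<inter> {q. bgap (agr q z m) (Gs s)}" for s
  define I where "I = {s :: bool list. length s = m} \<times> (UNIV :: bool set)"
  have finI: "finite I"
  proof -
    have "finite {s :: bool list. set s \<subseteq> UNIV \<and> length s = m}"
      by (rule finite_lists_length_eq) simp
    then show ?thesis unfolding I_def by simp
  qed
  define D where "D ij = B1 (fst ij)" for ij :: "bool list \<times> bool"
  have Dok: "\<forall>ij\<in>I. D ij \<subseteq> {r. \<forall>n. r n \<in> A} \<and> uncountable (D ij)"
  proof
    fix ij assume ij: "ij \<in> I"
    then have l: "length (fst ij) = m" unfolding I_def by auto
    have "B (fst ij) \<subseteq> Y" using Ps[OF l] by simp
    then have "D ij \<subseteq> Y" unfolding D_def B1_def by blast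
    then have "D ij \<subseteq> {r. \<forall>n. r n \<in> A}" using YA by blast
    moreover have "uncountable (D ij)" unfolding D_def B1_def by (rule Gs[OF l])
    ultimately show "D ij \<subseteq> {r. \<forall>n. r n \<in> A} \<and> uncountable (D ij)" by blast
  qed
  obtain q where q: "\<forall>i\<in>I. q i \<in> D i \<and> q i \<in> cond (D i) \<and> (\<forall>j\<in>I. j \<noteq> i \<longrightarrow> (\<exists>n\<ge>L. q i n \<noteq> q j n))"
    using pick[OF A finI Dok, of L] by blast
  define W where "W ij = (SOME n. L \<le> n \<and> q (fst ij) n \<noteq> q (snd ij) n)" for ij
  have W: "L \<le> W (i, j) \<and> q i (W (i, j)) \<noteq> q j (W (i, j))" if "i \<in> I" "j \<in> I" "i \<noteq> j" for i j
  proof -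
    have "\<forall>j\<in>I. j \<noteq> i \<longrightarrow> (\<exists>n\<ge>L. q i n \<noteq> q j n)"
      using bspec[OF q that(1)] by simp
    then have "\<exists>n\<ge>L. q i n \<noteq> q j n" using that(2,3) by simp
    then have ex: "\<exists>n. L \<le> n \<and> q i n \<noteq> q j n" by simp
    show ?thesis unfolding W_def fst_conv snd_conv by (rule someI_ex[OF ex])
  qed
  define L' where "L' = Suc (L + (\<Sum>ij\<in>I \<times> I. W ij))"
  have WL': "W (i, j) < L'" if "i \<in> I" "j \<in> I" for i j
  proof -
    have "W (i, j) \<le> (\<Sum>ij\<in>I \<times> I. W ij)"
      by (rule member_le_sum) (simp_all add: that finI)
    then show ?thesis unfolding L'_def by simp
  qed
  define pr where "pr t = (butlast t, last t)" for t :: "bool list"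
  define p' where "p' t = q (pr t)" for t
  define B' where "B' t = B1 (butlast t) \<inter> cyl L' (p' t)" for t
  have prI: "pr t \<in> I" if "length t = Suc m" for t using that by (simp add: pr_def I_def)
  have prinj: "pr s \<noteq> pr t" if "length s = Suc m" "length t = Suc m" "s \<noteq> t" for s t
  proof
    assume e: "pr s = pr t"
    have "s = butlast s @ [last s]" using that(1) by (metis append_butlast_last_id length_0_conv nat.distinct(1))
    also have "\<dots> = butlast t @ [last t]" using e by (simp add: pr_def)
    also have "\<dots> = t" using that(2) by (metis append_butlast_last_id length_0_conv nat.distinct(1))
    finally show False using that(3) by simp
  qed
  have LL': "L < L'" unfolding L'_def by simp
  have P': "Pst Y z (Suc m) (L', p', B')"
    unfolding Pst_def prod.case
  proof (intro conjI allI impI)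
    show "Suc m \<le> L'" using mL unfolding L'_def by simp
  next
    fix t :: "bool list" assume t: "length t = Suc m"
    have lb: "length (butlast t) = m" using t by simp
    have qt: "q (pr t) \<in> D (pr t)" "q (pr t) \<in> cond (D (pr t))" using q prI[OF t] by blast+
    have Dpr: "D (pr t) = B1 (butlast t)" by (simp add: D_def pr_def)
    show "p' t \<in> B' t" using qt(1) Dpr by (simp add: B'_def p'_def cyl_def)
    show "B' t \<subseteq> Y" using Ps[OF lb] unfolding B'_def B1_def by blast
    show "uncountable (B' t)" using qt(2) Dpr unfolding B'_def p'_def cond_def by simp
    show "B' t \<subseteq> cyl L' (p' t)" unfolding B'_def by blast
    fix k assume k: "k < Suc m"
    show "\<exists>G. \<forall>q\<in>B' t. bgap (agr q z k) G"
    proof (cases "k < m")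
      case True
      then obtain G where G: "\<forall>q\<in>B (butlast t). bgap (agr q z k) G" using Ps[OF lb] by blast
      have "B' t \<subseteq> B (butlast t)" unfolding B'_def B1_def by blast
      then show ?thesis using G by blast
    next
      case False
      then have km: "k = m" using k by simp
      have "\<forall>q\<in>B' t. bgap (agr q z k) (Gs (butlast t))" unfolding B'_def B1_def km by blast
      then show ?thesis by blast
    qed
  qed
  have Q': "Qst m (L, p, B) (L', p', B')"
    unfolding Qst_def prod.case
  proof (intro conjI allI impI)
    show "L < L'" by (rule LL')
  next
    fix s :: "bool list" and b assume "length s = m"
    show "B' (s @ [b]) \<subseteq> B s" unfolding B'_def B1_def by auto
  next
    fix s t :: "bool list" assume st: "length s = Suc m" "length t = Suc m" "s \<noteq> t"
    have d: "pr s \<noteq> pr t" by (rule prinj[OF st])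
    have "L \<le> W (pr s, pr t) \<and> q (pr s) (W (pr s, pr t)) \<noteq> q (pr t) (W (pr s, pr t))"
      by (rule W[OF prI[OF st(1)] prI[OF st(2)] d])
    moreover have "W (pr s, pr t) < L'" by (rule WL'[OF prI[OF st(1)] prI[OF st(2)]])
    ultimately show "\<exists>i. L \<le> i \<and> i < L' \<and> p' s i \<noteq> p' t i" unfolding p'_def by blast
  qed
  show ?thesis using P' Q' by blast
qed



definition pre :: "(nat \<Rightarrow> bool) \<Rightarrow> nat \<Rightarrow> bool list" where
  "pre \<alpha> n = map \<alpha> [0..<n]"

lemma pre_Suc: "pre \<alpha> (Suc n) = pre \<alpha> n @ [\<alpha> n]" by (simp add: pre_def)
lemma pre_len [simp]: "length (pre \<alpha> n) = n" by (simp add: pre_def)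
lemma pre_eq: "(\<And>i. i < n \<Longrightarrow> \<alpha> i = \<beta> i) \<Longrightarrow> pre \<alpha> n = pre \<beta> n"
  by (simp add: pre_def)
lemma pre_neq: "d < n \<Longrightarrow> \<alpha> d \<noteq> \<beta> d \<Longrightarrow> pre \<alpha> n \<noteq> pre \<beta> n"
proof
  assume "d < n" "\<alpha> d \<noteq> \<beta> d" "pre \<alpha> n = pre \<beta> n"
  then have "pre \<alpha> n ! d = pre \<beta> n ! d" by simp
  then show False using \<open>d < n\<close> \<open>\<alpha> d \<noteq> \<beta> d\<close> by (simp add: pre_def)
qed

lemma cantor_tree:
  fixes A :: "'a set" and X :: "(nat \<Rightarrow> 'a) set"
  assumes A: "finite A" and XA: "X \<subseteq> {r. \<forall>i. r i \<in> A}"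
    and Xc: "closedin (shift_top A) X" and z: "z \<in> X"
    and Yunc: "uncountable {y \<in> X. (y, z) \<in> SProx X}"
  shows "\<exists>C. cantor_set_in (shift_top A) C \<and> synd_scrambled X C"
proof -
  define Y where "Y = {y \<in> X. (y, z) \<in> SProx X}"
  have YX: "Y \<subseteq> X" unfolding Y_def by blast
  have YA: "Y \<subseteq> {r. \<forall>i. r i \<in> A}" using YX XA by blast
  have Yg: "\<exists>G. bgap (agr y z k) G" if "y \<in> Y" for y k
    using that unfolding Y_def SProx_iff by blast
  have unc: "uncountable Y" using Yunc unfolding Y_def .
  then obtain y0 where y0: "y0 \<in> Y" by (metis countable_empty equals0I)
  have P0: "Pst Y z 0 (0, \<lambda>_. y0, \<lambda>_. Y)"
    unfolding Pst_def using y0 unc by (simp add: cyl_def)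
  obtain f where f: "\<forall>n. Pst Y z n (f n) \<and> Qst n (f n) (f (Suc n))"
  proof -
    have "\<exists>f. \<forall>n. Pst Y z n (f n) \<and> Qst n (f n) (f (Suc n))"
    proof (rule dependent_nat_choice)
      show "\<exists>x. Pst Y z 0 x" using P0 by blast
    next
      fix x n assume "Pst Y z n x"
      moreover obtain L p B where "x = (L, p, B)" by (cases x) auto
      ultimately show "\<exists>y. Pst Y z (Suc n) y \<and> Qst n x y"
        using step[OF A YA Yg, of n L p B] by blast
    qed
    then show ?thesis using that by blast
  qed
  define L where "L n = fst (f n)" for n
  define p where "p n = fst (snd (f n))" for n
  define B where "B n = snd (snd (f n))" for n
  have fn: "f n = (L n, p n, B n)" for n by (simp add: L_def p_def B_def)
  have P: "n \<le> L n \<and> (\<forall>s. length s = n \<longrightarrow> p n s \<in> B n s \<and> B n s \<subseteq> Y \<and> uncountable (B n s) \<and>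
        B n s \<subseteq> cyl (L n) (p n s) \<and> (\<forall>k<n. \<exists>G. \<forall>q\<in>B n s. bgap (agr q z k) G))" for n
  proof -
    have "Pst Y z n (f n)" using f by blast
    then have "Pst Y z n (L n, p n, B n)" by (simp only: fn)
    then show ?thesis unfolding Pst_def prod.case .
  qed
  have Q: "L n < L (Suc n) \<and> (\<forall>s b. length s = n \<longrightarrow> B (Suc n) (s @ [b]) \<subseteq> B n s) \<and>
     (\<forall>s t. length s = Suc n \<longrightarrow> length t = Suc n \<longrightarrow> s \<noteq> t \<longrightarrow>
        (\<exists>i. L n \<le> i \<and> i < L (Suc n) \<and> p (Suc n) s i \<noteq> p (Suc n) t i))" for n
  proof -
    have "Qst n (f n) (f (Suc n))" using f by blast
    then have "Qst n (L n, p n, B n) (L (Suc n), p (Suc n), B (Suc n))" by (simp only: fn)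
    then show ?thesis unfolding Qst_def prod.case .
  qed
  have nL: "n \<le> L n" for n using P[of n] by blast
  have Lsuc: "L n \<le> L (Suc n)" for n using Q[of n] by simp
  have Lmono: "L m \<le> L n" if "m \<le> n" for m n
    by (rule lift_Suc_mono_le[of L, OF Lsuc that])
  have pB: "p n (pre \<alpha> n) \<in> B n (pre \<alpha> n)" for n \<alpha> using P[of n] by simp
  have BY: "B n (pre \<alpha> n) \<subseteq> Y" for n \<alpha> using P[of n] by simp
  have Bcyl: "B n (pre \<alpha> n) \<subseteq> cyl (L n) (p n (pre \<alpha> n))" for n \<alpha> using P[of n] by simp
  have nest: "B n (pre \<alpha> n) \<subseteq> B m (pre \<alpha> m)" if "m \<le> n" for m n \<alpha>
    using that
  proof (induction n rule: dec_induct)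
    case base then show ?case by simp
  next
    case (step n)
    have "B (Suc n) (pre \<alpha> (Suc n)) \<subseteq> B n (pre \<alpha> n)"
      unfolding pre_Suc using Q[of n] by simp
    then show ?case using step.IH by blast
  qed
  have agree: "p n (pre \<alpha> n) i = p m (pre \<alpha> m) i" if "m \<le> n" "i < L m" for m n i \<alpha>
  proof -
    have "p n (pre \<alpha> n) \<in> cyl (L m) (p m (pre \<alpha> m))"
      using pB[of n \<alpha>] nest[OF that(1), of \<alpha>] Bcyl[of m \<alpha>] by blast
    then show ?thesis using that(2) by (simp add: cyl_def)
  qed
  define h where "h \<alpha> i = p (Suc i) (pre \<alpha> (Suc i)) i" for \<alpha> i
  have hagree: "h \<alpha> i = p n (pre \<alpha> n) i" if "i < L n" for \<alpha> i n
  proof -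
    define M where "M = max n (Suc i)"
    have i1: "i < L (Suc i)" using nL[of "Suc i"] by simp
    have "p M (pre \<alpha> M) i = p n (pre \<alpha> n) i" by (rule agree) (use that in \<open>simp_all add: M_def\<close>)
    moreover have "p M (pre \<alpha> M) i = p (Suc i) (pre \<alpha> (Suc i)) i" by (rule agree) (use i1 in \<open>simp_all add: M_def\<close>)
    ultimately show ?thesis unfolding h_def by simp
  qed
  have hA: "\<forall>i. h \<alpha> i \<in> A" for \<alpha>
  proof
    fix i
    have "p (Suc i) (pre \<alpha> (Suc i)) \<in> Y" using pB BY by blast
    then show "h \<alpha> i \<in> A" using YA unfolding h_def by blast
  qed
  have hdiff: "\<exists>i\<ge>N. h \<alpha> i \<noteq> h \<beta> i" if neab: "\<alpha> \<noteq> \<beta>" for \<alpha> \<beta> N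
  proof -
    have "\<exists>d. \<alpha> d \<noteq> \<beta> d" using neab by (simp add: fun_eq_iff)
    then obtain d where d: "\<alpha> d \<noteq> \<beta> d" by blast
    define n where "n = max d N"
    have ne: "pre \<alpha> (Suc n) \<noteq> pre \<beta> (Suc n)" by (rule pre_neq[of d _ \<alpha> \<beta>]) (simp_all add: n_def d)
    obtain i where i: "L n \<le> i" "i < L (Suc n)" "p (Suc n) (pre \<alpha> (Suc n)) i \<noteq> p (Suc n) (pre \<beta> (Suc n)) i"
    proof -
      have "\<exists>i. L n \<le> i \<and> i < L (Suc n) \<and> p (Suc n) (pre \<alpha> (Suc n)) i \<noteq> p (Suc n) (pre \<beta> (Suc n)) i"
        using Q[of n] ne pre_len by blast
      then show ?thesis using that by blast
    qed
    have "h \<alpha> i \<noteq> h \<beta> i" using i hagree[OF i(2), of \<alpha>] hagree[OF i(2), of \<beta>] by simp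
    moreover have "N \<le> i" using i(1) nL[of n] by (simp add: n_def)
    ultimately show ?thesis by blast
  qed
  have hX: "h \<alpha> \<in> X" for \<alpha>
  proof (rule closed_DT_mem[OF Xc[unfolded shift_top_def] hA])
    show "\<forall>N. \<exists>y\<in>X. \<forall>i<N. y i = h \<alpha> i"
    proof
      fix N
      have "p N (pre \<alpha> N) \<in> X" using pB BY YX by blast
      moreover have "\<forall>i<N. p N (pre \<alpha> N) i = h \<alpha> i"
        using hagree nL[of N] by (metis less_le_trans)
      ultimately show "\<exists>y\<in>X. \<forall>i<N. y i = h \<alpha> i" by blast
    qed
  qed
  have hz: "\<exists>G. bgap (agr (h \<alpha>) z k) G" for \<alpha> k
  proof -
    have "\<forall>ka<Suc k. \<exists>G. \<forall>q\<in>B (Suc k) (pre \<alpha> (Suc k)). bgap (agr q z ka) G"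
      using P[of "Suc k"] pre_len by blast
    then obtain G where G: "\<forall>q\<in>B (Suc k) (pre \<alpha> (Suc k)). bgap (agr q z k) G"
      by blast
    have "bgap (agr (h \<alpha>) z k) G" unfolding bgap_def
    proof
      fix j
      define n where "n = Suc k + j + G + k"
      have qB: "p n (pre \<alpha> n) \<in> B (Suc k) (pre \<alpha> (Suc k))"
        using pB[of n \<alpha>] nest[of "Suc k" n \<alpha>] by (auto simp: n_def)
      then obtain m where m: "m \<in> agr (p n (pre \<alpha> n)) z k" "j \<le> m" "m < j + G"
        using G unfolding bgap_def by blast
      have "m \<in> agr (h \<alpha>) z k" unfolding agr_def
      proof (intro CollectI allI impI)
        fix i assume i: "i \<le> k"
        have "m + i < L n" using m(3) i nL[of n] by (simp add: n_def)
        then have "h \<alpha> (m + i) = p n (pre \<alpha> n) (m + i)" by (rule hagree)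
        moreover have "p n (pre \<alpha> n) (m + i) = z (m + i)" using m(1) i by (simp add: agr_def)
        ultimately show "h \<alpha> (m + i) = z (m + i)" by simp
      qed
      then show "\<exists>n\<in>agr (h \<alpha>) z k. j \<le> n \<and> n < j + G" using m by blast
    qed
    then show ?thesis by blast
  qed
  define CT where "CT = product_topology (\<lambda>_. discrete_topology (UNIV :: bool set)) (UNIV :: nat set)"
  have topCT: "topspace CT = UNIV" unfolding CT_def by (simp add: top_DT)
  have cont: "continuous_map CT (shift_top A) h"
    unfolding continuous_map
  proof (intro conjI allI impI)
    show "h ` topspace CT \<subseteq> topspace (shift_top A)"
      using hA by (auto simp: shift_top_def top_DT)
  next
    fix U assume U: "openin (shift_top A) U"
    show "openin CT {x \<in> topspace CT. h x \<in> U}"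
      unfolding CT_def open_DT
    proof (intro conjI ballI)
      show "{x \<in> topspace (product_topology (\<lambda>_. discrete_topology UNIV) UNIV). h x \<in> U}
           \<subseteq> {x. \<forall>i. x i \<in> (UNIV :: bool set)}" by simp
    next
      fix \<alpha> assume "\<alpha> \<in> {x \<in> topspace (product_topology (\<lambda>_. discrete_topology (UNIV :: bool set)) UNIV). h x \<in> U}"
      then have hU: "h \<alpha> \<in> U" by simp
      obtain N where N: "{y. (\<forall>i. y i \<in> A) \<and> (\<forall>i<N. y i = h \<alpha> i)} \<subseteq> U"
        using U hU unfolding shift_top_def open_DT by blast
      have "{y. (\<forall>i. y i \<in> (UNIV :: bool set)) \<and> (\<forall>i<N. y i = \<alpha> i)}
          \<subseteq> {x \<in> topspace (product_topology (\<lambda>_. discrete_topology UNIV) UNIV). h x \<in> U}"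
      proof
        fix \<beta> assume "\<beta> \<in> {y. (\<forall>i. y i \<in> (UNIV :: bool set)) \<and> (\<forall>i<N. y i = \<alpha> i)}"
        then have b: "\<And>i. i < N \<Longrightarrow> \<beta> i = \<alpha> i" by simp
        have pe: "pre \<beta> N = pre \<alpha> N" by (rule pre_eq) (use b in simp)
        have "\<forall>i<N. h \<beta> i = h \<alpha> i"
        proof (intro allI impI)
          fix i assume "i < N"
          then have "i < L N" using nL[of N] by simp
          then show "h \<beta> i = h \<alpha> i" using hagree[of i N \<beta>] hagree[of i N \<alpha>] pe by simp
        qed
        then have "h \<beta> \<in> U" using N hA[of \<beta>] by blast
        then show "\<beta> \<in> {x \<in> topspace (product_topology (\<lambda>_. discrete_topology UNIV) UNIV). h x \<in> U}"
          by (simp add: top_DT)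
      qed
      then show "\<exists>N. {y. (\<forall>i. y i \<in> (UNIV :: bool set)) \<and> (\<forall>i<N. y i = \<alpha> i)}
          \<subseteq> {x \<in> topspace (product_topology (\<lambda>_. discrete_topology UNIV) UNIV). h x \<in> U}" by blast
    qed
  qed
  define C where "C = h ` UNIV"
  have cpt: "compactin (shift_top A) C"
  proof -
    have "compact_space CT" unfolding CT_def
      by (simp add: compact_space_product_topology compact_space_discrete_topology)
    then have "compactin CT (topspace CT)" by (simp add: compact_space_def)
    then have "compactin (shift_top A) (h ` topspace CT)" by (rule image_compactin[OF _ cont])
    then show ?thesis unfolding C_def topCT .
  qed
  have perf: "C \<subseteq> (shift_top A) derived_set_of C"
  proof
    fix x assume "x \<in> C"
    then obtain \<alpha> where x: "x = h \<alpha>" unfolding C_def by blast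
    show "x \<in> (shift_top A) derived_set_of C"
      unfolding in_derived_set_of
    proof (intro conjI allI impI)
      show "x \<in> topspace (shift_top A)" using hA x by (simp add: shift_top_def)
    next
      fix T assume T: "x \<in> T \<and> openin (shift_top A) T"
      then obtain N where N: "{y. (\<forall>i. y i \<in> A) \<and> (\<forall>i<N. y i = x i)} \<subseteq> T"
        unfolding shift_top_def open_DT by blast
      define \<beta> where "\<beta> = \<alpha>(N := \<not> \<alpha> N)"
      have ab: "\<alpha> \<noteq> \<beta>" unfolding \<beta>_def by (metis fun_upd_same)
      have pe: "pre \<beta> N = pre \<alpha> N" by (rule pre_eq) (simp add: \<beta>_def)
      have "\<forall>i<N. h \<beta> i = x i"
      proof (intro allI impI)
        fix i assume "i < N"
        then have "i < L N" using nL[of N] by simp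
        then show "h \<beta> i = x i" using hagree[of i N \<beta>] hagree[of i N \<alpha>] pe x by simp
      qed
      then have "h \<beta> \<in> T" using N hA[of \<beta>] by blast
      moreover have "h \<beta> \<noteq> x" using hdiff[OF ab, of 0] x by auto
      moreover have "h \<beta> \<in> C" unfolding C_def by simp
      ultimately show "\<exists>y. y \<noteq> x \<and> y \<in> C \<and> y \<in> T" by blast
    qed
  qed
  have cantor: "cantor_set_in (shift_top A) C"
    unfolding cantor_set_in_def
  proof (intro conjI allI impI)
    show "C \<noteq> {}" unfolding C_def by simp
    show "compactin (shift_top A) C" by (rule cpt)
    show "C \<subseteq> (shift_top A) derived_set_of C" by (rule perf)
  next
    fix S assume "S \<subseteq> C \<and> connectedin (shift_top A) S"
    then show "\<exists>a. S \<subseteq> {a}" unfolding shift_top_def using totdisc_DT by blast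
  qed
  have scr: "synd_scrambled X C"
    unfolding synd_scrambled_def
  proof (intro conjI ballI impI)
    show "C \<subseteq> X" unfolding C_def using hX by blast
    have tf: "(\<lambda>_::nat. True) \<noteq> (\<lambda>_. False)" by (simp add: fun_eq_iff)
    obtain i where "h (\<lambda>_. True) i \<noteq> h (\<lambda>_. False) i" using hdiff[OF tf, of 0] by blast
    then have "h (\<lambda>_. True) \<noteq> h (\<lambda>_. False)" by auto
    then show "\<exists>x\<in>C. \<exists>y\<in>C. x \<noteq> y" unfolding C_def by blast
  next
    fix x y assume x: "x \<in> C" and y: "y \<in> C" and xy: "x \<noteq> y"
    obtain \<alpha> where a: "x = h \<alpha>" using x unfolding C_def by blast
    obtain \<beta> where b: "y = h \<beta>" using y unfolding C_def by blast
    have ab: "\<alpha> \<noteq> \<beta>" using xy a b by blast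
    have hx: "\<forall>k. \<exists>G. bgap (agr x z k) G" unfolding a using hz by blast
    have hy: "\<forall>k. \<exists>G. bgap (agr y z k) G" unfolding b using hz by blast
    have "\<forall>k. \<exists>G. bgap (agr x y k) G" by (rule agr_trans[OF hx hy])
    moreover have "x \<in> X" "y \<in> X" unfolding a b by (rule hX)+
    ultimately have sp: "(x, y) \<in> SProx X" unfolding SProx_iff by blast
    have na: "(x, y) \<notin> Asy X"
    proof
      assume "(x, y) \<in> Asy X"
      then obtain N where N: "\<forall>n\<ge>N. x n = y n" using Asy_ev by blast
      obtain i where i: "i \<ge> N" "h \<alpha> i \<noteq> h \<beta> i" using hdiff[OF ab, of N] by blast
      have "x i = y i" using N i(1) by blast
      then show False using i(2) unfolding a b by simp
    qed
    show "(x, y) \<in> SProx X - Asy X" using sp na by blast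
  qed
  show ?thesis using cantor scr by blast
qed


theorem proposition3p5:
  fixes A :: "'a set" and X :: "(nat \<Rightarrow> 'a) set"
  assumes "one_sided_subshift A X"
    and "\<exists>z\<in>X. uncountable {y \<in> X. (y, z) \<in> SProx X}"
  shows "\<exists>C. cantor_set_in (shift_top A) C \<and> synd_scrambled X C"
proof -
  have A: "finite A" using assms(1) by (simp add: one_sided_subshift_def)
  have Xt: "X \<subseteq> topspace (shift_top A)" using assms(1) by (simp add: one_sided_subshift_def)
  then have XA: "X \<subseteq> {r. \<forall>i. r i \<in> A}" by (auto simp: shift_top_def)
  have Xc: "closedin (shift_top A) X" using assms(1) by (simp add: one_sided_subshift_def)
  obtain z where z: "z \<in> X" "uncountable {y \<in> X. (y, z) \<in> SProx X}" using assms(2) by blast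
  show ?thesis by (rule cantor_tree[OF A XA Xc z])
qed

end
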